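(* Let $0<\alpha<1$, let $\Gamma$ be a Jordan curve of class $C^{1+\alpha}$, and let $\eta\in C^{1+\alpha}(\Gamma)$ be such that $\eta(\Gamma)=\mathbb{T}$ and $\eta^{-1}:\mathbb{T}\to\Gamma$ exists and is differentiable. Fix any pseudoanalytic extension of $\eta$ to $\mathbb{C}$, also denoted $\eta$. Then there is a neighborhood $U$ of $\Gamma$ such that $\eta:U\to\eta(U)$ is a $C^1$ diffeomorphism, $\eta(U)$ is a neighborhood of $\mathbb{T}$, and $\eta$ is bi-Lipschitz in $U$: there are constants $c,C>0$ with $$c|z-w|\le|\eta(z)-\eta(w)|\le C|z-w|,\qquad z,w\in U.$$
   Context: $\mathbb{T}$ is the unit circle. A Jordan curve $\Gamma$ is of class $C^{1+\alpha}$ if $\Gamma=\psi(\mathbb{T})$ for a bijection $\psi:\mathbb{T}\to\Gamma$ with $\psi\in C^1(\mathbb{T})$, $\psi'$ nowhere vanishing and $\psi'$ Hölder of order $\alpha$. A function $f:\Gamma\to\mathbb{C}$ belongs to $C^{1+\alpha}(\Gamma)$ if $f\circ\psi\in C^1(\mathbb{T})$ and $(f\circ\psi)'$ is Hölder of order $\alpha$. A pseudoanalytic extension of $f\in C^{1+\alpha}(\Gamma)$ is a function $F\in C^1(\mathbb{C})$ with $F|_\Gamma=f$ and $\left|\frac{\partial F}{\partial\bar z}(z)\right|\le C_f\operatorname{dist}(z,\Gamma)^\alpha$ for all $z\in\mathbb{C}$, for some constant $C_f$, where $\frac{\partial}{\partial\bar z}=\frac12\left(\frac{\partial}{\partial x}+i\frac{\partial}{\partial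 y}\right)$. Such extensions always exist. *)

theory Defs
  imports "HOL-Analysis.Analysis"
begin

text \<open>Points of the unit circle are parametrised by angle t via cis t.
  A function g on the circle is handled through the 2pi-periodic function t |-> g (cis t).\<close>

definition holder_on :: "real \<Rightarrow> real set \<Rightarrow> (real \<Rightarrow> complex) \<Rightarrow> bool" where
  "holder_on \<alpha> S f \<longleftrightarrow> (\<exists>K. \<forall>x\<in>S. \<forall>y\<in>S. norm (f x - f y) \<le> K * dist x y powr \<alpha>)"

definition C1a_circle_with :: "real \<Rightarrow> (complex \<Rightarrow> complex) \<Rightarrow> (real \<Rightarrow> complex) \<Rightarrow> bool" where
  "C1a_circle_with \<alpha> g g' \<longleftrightarrow>
     (\<forall>t. ((\<lambda>s. g (cis s)) has_vector_derivative g' t) (at t)) \<and> holder_on \<alpha> UNIV g'"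

definition C1a_circle :: "real \<Rightarrow> (complex \<Rightarrow> complex) \<Rightarrow> bool" where
  "C1a_circle \<alpha> g \<longleftrightarrow> (\<exists>g'. C1a_circle_with \<alpha> g g')"

definition C1a_jordan_param :: "real \<Rightarrow> (complex \<Rightarrow> complex) \<Rightarrow> complex set \<Rightarrow> bool" where
  "C1a_jordan_param \<alpha> \<psi> \<Gamma> \<longleftrightarrow> bij_betw \<psi> (sphere 0 1) \<Gamma> \<and>
     (\<exists>\<psi>'. C1a_circle_with \<alpha> \<psi> \<psi>' \<and> (\<forall>t. \<psi>' t \<noteq> 0))"

definition C1a_on_curve :: "real \<Rightarrow> (complex \<Rightarrow> complex) \<Rightarrow> (complex \<Rightarrow> complex) \<Rightarrow> bool" where
  "C1a_on_curve \<alpha> \<psi> f \<longleftrightarrow> C1a_circle \<alpha> (f \<circ> \<psi>)"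

definition C1_on :: "complex set \<Rightarrow> (complex \<Rightarrow> complex) \<Rightarrow> bool" where
  "C1_on S f \<longleftrightarrow> (\<forall>z\<in>S. f differentiable (at z)) \<and>
     continuous_on S (\<lambda>z. frechet_derivative f (at z) 1) \<and>
     continuous_on S (\<lambda>z. frechet_derivative f (at z) \<i>)"

text \<open>Wirtinger derivative d/d zbar = (d/dx + i d/dy)/2.\<close>
definition dbar :: "(complex \<Rightarrow> complex) \<Rightarrow> complex \<Rightarrow> complex" where
  "dbar F z = (frechet_derivative F (at z) 1 + \<i> * frechet_derivative F (at z) \<i>) / 2"

definition pseudoanalytic_ext ::
  "real \<Rightarrow> complex set \<Rightarrow> (complex \<Rightarrow> complex) \<Rightarrow> (complex \<Rightarrow> complex) \<Rightarrow> bool" where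
  "pseudoanalytic_ext \<alpha> \<Gamma> f F \<longleftrightarrow> C1_on UNIV F \<and> (\<forall>z\<in>\<Gamma>. F z = f z) \<and>
     (\<exists>C. \<forall>z. norm (dbar F z) \<le> C * infdist z \<Gamma> powr \<alpha>)"

end

theory Submission
  imports Defs
begin


lemma lin_decomp:
  assumes "linear F"
  shows "F h = of_real (Re h) * F 1 + of_real (Im h) * F \<i>"
proof -
  have "h = Re h *\<^sub>R 1 + Im h *\<^sub>R \<i>" by (simp add: complex_eq_iff)
  then have "F h = F (Re h *\<^sub>R 1 + Im h *\<^sub>R \<i>)" by simp
  also have "\<dots> = Re h *\<^sub>R F 1 + Im h *\<^sub>R F \<i>"
    using assms by (simp add: linear_add linear_scale)
  finally show ?thesis by (simp add: scaleR_conv_of_real)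
qed

lemma cis_Arg1: "norm (u::complex) = 1 \<Longrightarrow> cis (Arg u) = u"
proof -
  assume "norm u = 1"
  then have "u \<noteq> 0" by auto
  then show ?thesis using \<open>norm u = 1\<close> by (simp add: cis_Arg sgn_eq)
qed

lemma nondeg:
  fixes \<eta> \<psi> :: "complex \<Rightarrow> complex"
  assumes psi: "C1a_jordan_param \<alpha> \<psi> \<Gamma>"
    and img: "\<eta> ` \<Gamma> = sphere 0 1"
    and inj: "inj_on \<eta> \<Gamma>"
    and inv: "\<forall>t. (\<lambda>s. the_inv_into \<Gamma> \<eta> (cis s)) differentiable (at t)"
    and diff: "\<And>z. \<eta> differentiable (at z)"
    and cr: "\<And>z. z \<in> \<Gamma> \<Longrightarrow> frechet_derivative \<eta> (at z) \<i> = \<i> * frechet_derivative \<eta> (at z) 1"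
    and z0: "z0 \<in> \<Gamma>"
  shows "frechet_derivative \<eta> (at z0) 1 \<noteq> 0"
proof
  assume P0: "frechet_derivative \<eta> (at z0) 1 = 0"
  obtain \<psi>' where bij: "bij_betw \<psi> (sphere 0 1) \<Gamma>"
    and \<psi>d: "\<And>t. ((\<lambda>s. \<psi> (cis s)) has_vector_derivative \<psi>' t) (at t)"
    and \<psi>nz: "\<And>t. \<psi>' t \<noteq> 0"
    using psi unfolding C1a_jordan_param_def C1a_circle_with_def by blast
  obtain u where u: "u \<in> sphere 0 1" "z0 = \<psi> u"
    using bij z0 unfolding bij_betw_def by blast
  define t where "t = Arg u"
  have ut: "cis t = u"
    using u(1) by (simp add: t_def cis_Arg1)
  define \<gamma> where "\<gamma> = (\<lambda>s. \<psi> (cis s))"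
  have \<gamma>t: "\<gamma> t = z0" using ut u by (simp add: \<gamma>_def)
  have \<gamma>in: "\<gamma> s \<in> \<Gamma>" for s
    using bij unfolding bij_betw_def \<gamma>_def by auto
  define F where "F = frechet_derivative \<eta> (at z0)"
  have Fd: "(\<eta> has_derivative F) (at z0)"
    unfolding F_def using diff frechet_derivative_works by blast
  have F0: "F v = 0" for v
  proof -
    have "linear F" using Fd has_derivative_linear by blast
    then have "F v = of_real (Re v) * F 1 + of_real (Im v) * F \<i>" by (rule lin_decomp)
    then show ?thesis using cr[OF z0] P0 by (simp add: F_def)
  qed
  have \<gamma>d: "(\<gamma> has_derivative (\<lambda>h. h *\<^sub>R \<psi>' t)) (at t)"
    using \<psi>d[of t] unfolding \<gamma>_def has_vector_derivative_def .
  have \<phi>d: "((\<eta> \<circ> \<gamma>) has_derivative (\<lambda>h. 0)) (at t)"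
  proof -
    have "((\<eta> \<circ> \<gamma>) has_derivative (F \<circ> (\<lambda>h. h *\<^sub>R \<psi>' t))) (at t)"
      using diff_chain_at[OF \<gamma>d] Fd \<gamma>t by simp
    moreover have "(F \<circ> (\<lambda>h. h *\<^sub>R \<psi>' t)) = (\<lambda>h. 0)" using F0 by auto
    ultimately show ?thesis by simp
  qed
  define w0 where "w0 = \<eta> z0"
  have w0s: "norm w0 = 1" using img z0 unfolding w0_def by auto
  then have w0nz: "w0 \<noteq> 0" by auto
  define t0 where "t0 = Arg w0"
  have cist0: "cis t0 = w0" using w0s by (simp add: t0_def cis_Arg1)
  define L where "L = (\<lambda>w. t0 + Im (Ln (w / w0)))"
  have Ld: "L differentiable (at w0)"
  proof -
    have "1 \<notin> \<real>\<^sub>\<le>\<^sub>0" by (simp add: nonpos_Reals_def)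
    then have "Ln field_differentiable at (w0 / w0)" using w0nz by (simp add: field_differentiable_at_Ln)
    moreover have "(\<lambda>w. w / w0) field_differentiable at w0" using w0nz by (intro derivative_intros) auto
    ultimately have "(\<lambda>w. Ln (w / w0)) field_differentiable at w0"
      using field_differentiable_compose[of "\<lambda>w. w / w0" w0 Ln] by (simp add: o_def)
    then have "(\<lambda>w. Ln (w / w0)) differentiable (at w0)"
      by (rule field_differentiable_imp_differentiable)
    then have "(\<lambda>w. Im (Ln (w / w0))) differentiable (at w0)"
    proof -
      have "Im differentiable at (Ln (w0 / w0))"
        using bounded_linear_Im bounded_linear_imp_differentiable by blast
      from differentiable_compose[of Im "\<lambda>w. Ln (w / w0)" w0 UNIV, OF this]
      show ?thesis using \<open>(\<lambda>w. Ln (w / w0)) differentiable (at w0)\<close> by simp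
    qed
    then show ?thesis unfolding L_def by (intro derivative_intros) auto
  qed
  define k where "k = (\<lambda>s. the_inv_into \<Gamma> \<eta> (cis s))"
  have kd: "k differentiable (at (L w0))" using inv unfolding k_def by blast
  have keq: "k (L ((\<eta> \<circ> \<gamma>) s)) = \<gamma> s" for s
  proof -
    define v where "v = \<eta> (\<gamma> s) / w0"
    have ns: "norm (\<eta> (\<gamma> s)) = 1" using img \<gamma>in[of s] by auto
    then have nv: "norm v = 1" using w0s by (simp add: v_def norm_divide)
    then have vnz: "v \<noteq> 0" by auto
    have "cis (Im (Ln v)) = v"
      using cis_Arg1[OF nv] Arg_eq_Im_Ln[OF vnz] by simp
    then have "cis (L (\<eta> (\<gamma> s))) = \<eta> (\<gamma> s)"
      unfolding L_def using cist0 w0nz by (simp add: cis_mult[symmetric] v_def)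
    then show ?thesis
      unfolding k_def using the_inv_into_f_f[OF inj \<gamma>in] by simp
  qed
  obtain DL where DL: "(L has_derivative DL) (at w0)" using Ld differentiable_def by blast
  obtain Dk where Dk: "(k has_derivative Dk) (at (L w0))" using kd differentiable_def by blast
  have w0eq: "(\<eta> \<circ> \<gamma>) t = w0" using \<gamma>t by (simp add: w0_def)
  have "((L \<circ> (\<eta> \<circ> \<gamma>)) has_derivative (DL \<circ> (\<lambda>h. 0))) (at t)"
    using diff_chain_at[OF \<phi>d] DL w0eq by simp
  then have "((k \<circ> (L \<circ> (\<eta> \<circ> \<gamma>))) has_derivative (Dk \<circ> (DL \<circ> (\<lambda>h. 0)))) (at t)"
    using diff_chain_at Dk w0eq by (metis comp_apply)
  moreover have "Dk \<circ> (DL \<circ> (\<lambda>h::real. 0)) = (\<lambda>h. 0)"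
    using has_derivative_linear[OF DL] has_derivative_linear[OF Dk]
    by (auto simp: linear_0)
  moreover have "k \<circ> (L \<circ> (\<eta> \<circ> \<gamma>)) = \<gamma>" using keq by auto
  ultimately have "(\<gamma> has_derivative (\<lambda>h. 0)) (at t)" by (metis (no_types))
  from has_derivative_unique[OF this \<gamma>d] have "(\<lambda>h::real. 0) = (\<lambda>h. h *\<^sub>R \<psi>' t)" .
  then have "\<psi>' t = 0" by (metis scaleR_one)
  then show False using \<psi>nz by blast
qed



lemma global2:
  fixes \<eta> :: "complex \<Rightarrow> complex" and \<Gamma> :: "complex set" and P Q :: "complex \<Rightarrow> complex"
    and D :: "complex \<Rightarrow> complex \<Rightarrow> complex"
  assumes C1: "C1_on UNIV \<eta>" and comp: "compact \<Gamma>" and ne: "\<Gamma> \<noteq> {}" and inj: "inj_on \<eta> \<Gamma>"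
    and Dd: "\<And>x. (\<eta> has_derivative D x) (at x)"
    and Ddec: "\<And>x h. D x h = of_real (Re h) * P x + of_real (Im h) * Q x"
    and Dfr: "\<And>x. D x = frechet_derivative \<eta> (at x)"
    and contP: "continuous_on UNIV P" and contQ: "continuous_on UNIV Q"
    and conteta: "continuous_on UNIV \<eta>"
    and m0: "0 < m" and \<rho>0: "0 < \<rho>" and \<rho>1: "\<rho> \<le> 1" and B0: "0 \<le> B" and S0: "0 \<le> S" and R0pos: "0 \<le> R0"
    and R0: "\<And>z. z \<in> \<Gamma> \<Longrightarrow> norm z \<le> R0"
    and S: "\<And>x. norm x \<le> R0 + 1 \<Longrightarrow> norm (\<eta> x) \<le> S"
    and ub: "\<And>z0 x y. z0 \<in> \<Gamma> \<Longrightarrow> x \<in> ball z0 \<rho> \<Longrightarrow> y \<in> ball z0 \<rho> \<Longrightarrow> norm (\<eta> x - \<eta> y) \<le> B * norm (x - y)"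
    and lb: "\<And>z0 x y. z0 \<in> \<Gamma> \<Longrightarrow> x \<in> ball z0 \<rho> \<Longrightarrow> y \<in> ball z0 \<rho> \<Longrightarrow> m / 2 * norm (x - y) \<le> norm (\<eta> x - \<eta> y)"
    and dlb: "\<And>z0 x h. z0 \<in> \<Gamma> \<Longrightarrow> x \<in> ball z0 \<rho> \<Longrightarrow> m / 2 * norm h \<le> norm (D x h)"
  shows "\<exists>U. open U \<and> \<Gamma> \<subseteq> U \<and> inj_on \<eta> U \<and> C1_on U \<eta> \<and>
           open (\<eta> ` U) \<and> \<eta> ` \<Gamma> \<subseteq> \<eta> ` U \<and>
           (\<exists>g. (\<forall>z\<in>U. g (\<eta> z) = z) \<and> C1_on (\<eta> ` U) g) \<and>
           (\<exists>c C. 0 < c \<and> 0 < C \<and> (\<forall>z\<in>U. \<forall>w\<in>U.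
               c * norm (z - w) \<le> norm (\<eta> z - \<eta> w) \<and> norm (\<eta> z - \<eta> w) \<le> C * norm (z - w)))"
proof -
  obtain \<epsilon>0 where e0: "\<epsilon>0 > 0"
    and e0b: "\<And>p q. p \<in> \<Gamma> \<Longrightarrow> q \<in> \<Gamma> \<Longrightarrow> \<rho> / 4 \<le> dist p q \<Longrightarrow> \<epsilon>0 \<le> norm (\<eta> p - \<eta> q)"
  proof -
    define Sp where "Sp = (\<Gamma> \<times> \<Gamma>) \<inter> {p. \<rho> / 4 \<le> dist (fst p) (snd p)}"
    have cl: "closed {p::complex\<times>complex. \<rho> / 4 \<le> dist (fst p) (snd p)}"
      by (intro closed_Collect_le continuous_intros)
    have cSp: "compact Sp" unfolding Sp_def
      using compact_Int_closed[OF compact_Times[OF comp comp] cl] .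
    show ?thesis
    proof (cases "Sp = {}")
      case True
      show ?thesis
      proof (rule that[of 1])
        fix p q assume "p \<in> \<Gamma>" "q \<in> \<Gamma>" "\<rho> / 4 \<le> dist p q"
        then have "(p, q) \<in> Sp" by (simp add: Sp_def)
        then show "1 \<le> norm (\<eta> p - \<eta> q)" using True by blast
      qed simp
    next
      case False
      have "continuous_on UNIV (\<lambda>p::complex\<times>complex. norm (\<eta> (fst p) - \<eta> (snd p)))"
        by (intro continuous_intros continuous_on_compose2[OF conteta]) auto
      then have "continuous_on Sp (\<lambda>p::complex\<times>complex. norm (\<eta> (fst p) - \<eta> (snd p)))"
        by (rule continuous_on_subset) auto
      from continuous_attains_inf[OF cSp False this] obtain p0 where
        p0: "p0 \<in> Sp" "\<And>p. p \<in> Sp \<Longrightarrow> norm (\<eta> (fst p0) - \<eta> (snd p0)) \<le> norm (\<eta> (fst p) - \<eta> (snd p))"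
        by blast
      have "fst p0 \<noteq> snd p0" using p0(1) \<rho>0 by (auto simp: Sp_def)
      moreover have "fst p0 \<in> \<Gamma>" "snd p0 \<in> \<Gamma>" using p0(1) by (auto simp: Sp_def)
      ultimately have "\<eta> (fst p0) \<noteq> \<eta> (snd p0)" using inj by (metis inj_on_def)
      then have pos: "norm (\<eta> (fst p0) - \<eta> (snd p0)) > 0" by simp
      show ?thesis
      proof (rule that[OF pos])
        fix p q assume "p \<in> \<Gamma>" "q \<in> \<Gamma>" "\<rho> / 4 \<le> dist p q"
        then have "(p, q) \<in> Sp" by (simp add: Sp_def)
        from p0(2)[OF this] show "norm (\<eta> (fst p0) - \<eta> (snd p0)) \<le> norm (\<eta> p - \<eta> q)" by simp
      qed
    qed
  qed
  define r where "r = min (\<rho> / 8) (\<epsilon>0 / (4 * (B + 1)))"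
  have r0: "r > 0" using \<rho>0 e0 B0 by (simp add: r_def)
  have r8: "r \<le> \<rho> / 8" unfolding r_def by (rule min.cobounded1)
  have rB: "B * r \<le> \<epsilon>0 / 4"
  proof -
    have "r \<le> \<epsilon>0 / (4 * (B + 1))" unfolding r_def by (rule min.cobounded2)
    then have "(B + 1) * r \<le> (B + 1) * (\<epsilon>0 / (4 * (B + 1)))" using B0 by (intro mult_left_mono) auto
    also have "\<dots> = \<epsilon>0 / 4" using B0 by (simp add: field_simps)
    finally show ?thesis using r0 by (simp add: algebra_simps)
  qed
  define U where "U = {z. infdist z \<Gamma> < r}"
  have openU: "open U" unfolding U_def
    by (intro open_Collect_less continuous_on_infdist continuous_on_id continuous_on_const)
  have GU: "\<Gamma> \<subseteq> U" unfolding U_def using r0 by auto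
  have near: "\<exists>z'\<in>\<Gamma>. dist z z' < r" if "z \<in> U" for z
  proof -
    obtain z' where "z' \<in> \<Gamma>" "infdist z \<Gamma> = dist z z'"
      using infdist_attains_inf[OF compact_imp_closed[OF comp] ne] by blast
    then show ?thesis using that by (auto simp: U_def)
  qed
  have normU: "norm z \<le> R0 + 1" if "z' \<in> \<Gamma>" "dist z z' < r" for z z'
  proof -
    have "norm z \<le> norm z' + dist z z'" by (metis dist_norm norm_triangle_sub add.commute)
    then show ?thesis using R0[OF that(1)] that(2) r8 \<rho>1 by linarith
  qed
  define c where "c = min (m / 2) (\<epsilon>0 / (4 * (R0 + 1)))"
  define C where "C = B + 4 * S / \<rho> + 1"
  have cm: "c \<le> m / 2" unfolding c_def by (rule min.cobounded1)
  have ce: "c \<le> \<epsilon>0 / (4 * (R0 + 1))" unfolding c_def by (rule min.cobounded2)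
  have inb: "x \<in> ball y \<rho>" if "dist x y < r" for x y
  proof -
    have "dist y x = dist x y" by (rule dist_commute)
    then have "dist y x < \<rho>" using that r8 \<rho>0 by linarith
    then show ?thesis by simp
  qed
  have c0: "c > 0" using m0 e0 R0pos by (simp add: c_def)
  have SR: "0 \<le> 4 * S / \<rho>" using S0 \<rho>0 by simp
  have C0: "C > 0" using B0 SR unfolding C_def by linarith
  have bilip: "c * norm (z - w) \<le> norm (\<eta> z - \<eta> w) \<and> norm (\<eta> z - \<eta> w) \<le> C * norm (z - w)"
    if zU: "z \<in> U" and wU: "w \<in> U" for z w
  proof -
    obtain z' where z': "z' \<in> \<Gamma>" "dist z z' < r" using near[OF zU] by blast
    obtain w' where w': "w' \<in> \<Gamma>" "dist w w' < r" using near[OF wU] by blast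
    show ?thesis
    proof (cases "dist z w < \<rho> / 2")
      case True
      have zb: "z \<in> ball z' \<rho>" using inb z'(2) by blast
      have "dist z' w \<le> dist z' z + dist z w" by (rule dist_triangle)
      moreover have "dist z' z = dist z z'" by (rule dist_commute)
      ultimately have "dist z' w < \<rho>" using z'(2) r8 True \<rho>0 by linarith
      then have wb: "w \<in> ball z' \<rho>" by simp
      have "c * norm (z - w) \<le> m / 2 * norm (z - w)" using cm by (intro mult_right_mono) auto
      also have "\<dots> \<le> norm (\<eta> z - \<eta> w)" using lb[OF z'(1) zb wb] .
      finally have 1: "c * norm (z - w) \<le> norm (\<eta> z - \<eta> w)" .
      have "norm (\<eta> z - \<eta> w) \<le> B * norm (z - w)" using ub[OF z'(1) zb wb] .
      also have "\<dots> \<le> C * norm (z - w)" using SR by (intro mult_right_mono) (auto simp: C_def)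
      finally show ?thesis using 1 by simp
    next
      case False
      then have zw: "\<rho> / 2 \<le> norm (z - w)" by (simp add: dist_norm)
      have t1: "dist z w \<le> dist z z' + dist z' w" by (rule dist_triangle)
      have t2: "dist z' w \<le> dist z' w' + dist w' w" by (rule dist_triangle)
      have t3: "dist w' w = dist w w'" by (rule dist_commute)
      have "\<rho> / 4 \<le> dist z' w'" using t1 t2 t3 z'(2) w'(2) r8 False by linarith
      then have e1: "\<epsilon>0 \<le> norm (\<eta> z' - \<eta> w')" using e0b z'(1) w'(1) by blast
      have zb: "z \<in> ball z' \<rho>" using inb z'(2) by blast
      have z'b: "z' \<in> ball z' \<rho>" using \<rho>0 by simp
      have wb: "w \<in> ball w' \<rho>" using inb w'(2) by blast
      have w'b: "w' \<in> ball w' \<rho>" using \<rho>0 by simp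
      have "norm (\<eta> z - \<eta> z') \<le> B * norm (z - z')" using ub[OF z'(1) zb z'b] .
      also have "\<dots> \<le> B * r" using z'(2) B0 by (intro mult_left_mono) (auto simp: dist_norm)
      finally have e2: "norm (\<eta> z - \<eta> z') \<le> \<epsilon>0 / 4" using rB by linarith
      have "norm (\<eta> w - \<eta> w') \<le> B * norm (w - w')" using ub[OF w'(1) wb w'b] .
      also have "\<dots> \<le> B * r" using w'(2) B0 by (intro mult_left_mono) (auto simp: dist_norm)
      finally have e3: "norm (\<eta> w - \<eta> w') \<le> \<epsilon>0 / 4" using rB by linarith
      have "norm (\<eta> z' - \<eta> w') \<le> norm (\<eta> z - \<eta> w) + norm (\<eta> z - \<eta> z') + norm (\<eta> w - \<eta> w')"
      proof -
        have eq: "\<eta> z' - \<eta> w' = ((\<eta> z - \<eta> w) - (\<eta> z - \<eta> z')) + (\<eta> w - \<eta> w')"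
          by (simp add: algebra_simps)
        have "norm (\<eta> z' - \<eta> w') \<le> norm ((\<eta> z - \<eta> w) - (\<eta> z - \<eta> z')) + norm (\<eta> w - \<eta> w')"
          unfolding eq by (rule norm_triangle_ineq)
        moreover have "norm ((\<eta> z - \<eta> w) - (\<eta> z - \<eta> z')) \<le> norm (\<eta> z - \<eta> w) + norm (\<eta> z - \<eta> z')"
          by (rule norm_triangle_ineq4)
        ultimately show ?thesis by linarith
      qed
      then have lowe: "\<epsilon>0 / 2 \<le> norm (\<eta> z - \<eta> w)" using e1 e2 e3 by linarith
      have nz: "norm z \<le> R0 + 1" using normU z' by blast
      have nw: "norm w \<le> R0 + 1" using normU w' by blast
      have "norm (z - w) \<le> norm z + norm w" by (rule norm_triangle_ineq4)
      then have zw2: "norm (z - w) \<le> (R0 + 1) + (R0 + 1)" using nz nw by linarith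
      have "c * norm (z - w) \<le> \<epsilon>0 / (4 * (R0 + 1)) * norm (z - w)"
        using ce by (intro mult_right_mono) auto
      also have "\<dots> \<le> \<epsilon>0 / (4 * (R0 + 1)) * ((R0 + 1) + (R0 + 1))"
        using zw2 e0 R0pos by (intro mult_left_mono) auto
      also have "\<dots> = \<epsilon>0 / 2" using R0pos by (simp add: field_simps)
      finally have 1: "c * norm (z - w) \<le> norm (\<eta> z - \<eta> w)" using lowe by linarith
      have "norm (\<eta> z - \<eta> w) \<le> norm (\<eta> z) + norm (\<eta> w)" by (rule norm_triangle_ineq4)
      also have "\<dots> \<le> S + S" using S[OF nz] S[OF nw] by linarith
      also have "\<dots> = 4 * S / \<rho> * (\<rho> / 2)" using \<rho>0 by (simp add: field_simps)
      also have "\<dots> \<le> 4 * S / \<rho> * norm (z - w)" using zw S0 \<rho>0 by (intro mult_left_mono) auto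
      also have "\<dots> \<le> C * norm (z - w)" using B0 by (intro mult_right_mono) (auto simp: C_def)
      finally show ?thesis using 1 by simp
    qed
  qed
  have injU: "inj_on \<eta> U"
  proof (rule inj_onI)
    fix z w assume "z \<in> U" "w \<in> U" "\<eta> z = \<eta> w"
    then have "c * norm (z - w) \<le> 0" using bilip[of z w] by simp
    then show "z = w" using c0 by (simp add: mult_le_0_iff)
  qed
  have C1U: "C1_on U \<eta>" using C1 unfolding C1_on_def by (auto intro: continuous_on_subset)
  have openV: "open (\<eta> ` U)"
    using invariance_of_domain[OF continuous_on_subset[OF conteta] openU injU] by simp
  define g where "g = the_inv_into U \<eta>"
  have g\<eta>: "g (\<eta> z) = z" if "z \<in> U" for z
    unfolding g_def using the_inv_into_f_f[OF injU that] .
  define det where "det x = Im (cnj (P x) * Q x)" for x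
  have detnz: "det x \<noteq> 0" if xU: "x \<in> U" for x
  proof
    assume d0: "det x = 0"
    obtain x' where x': "x' \<in> \<Gamma>" "dist x x' < r" using near[OF xU] by blast
    have xb: "x \<in> ball x' \<rho>" using inb x'(2) by blast
    have k1: "D x (Complex (Re (Q x)) (- Re (P x))) = 0"
      unfolding Ddec using d0 by (simp add: det_def complex_eq_iff algebra_simps)
    have k2: "D x (Complex (Im (Q x)) (- Im (P x))) = 0"
      unfolding Ddec using d0 by (simp add: det_def complex_eq_iff algebra_simps)
    have "m / 2 * norm (Complex (Re (Q x)) (- Re (P x))) \<le> 0" using dlb[OF x'(1) xb, of "Complex (Re (Q x)) (- Re (P x))"] k1 by simp
    then have "Complex (Re (Q x)) (- Re (P x)) = 0" using m0
      by (smt (verit) norm_ge_zero norm_le_zero_iff zero_less_mult_iff half_gt_zero)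
    moreover have "m / 2 * norm (Complex (Im (Q x)) (- Im (P x))) \<le> 0" using dlb[OF x'(1) xb, of "Complex (Im (Q x)) (- Im (P x))"] k2 by simp
    then have "Complex (Im (Q x)) (- Im (P x)) = 0" using m0
      by (smt (verit) norm_ge_zero norm_le_zero_iff zero_less_mult_iff half_gt_zero)
    ultimately have "P x = 0" by (simp add: complex_eq_iff)
    then have "D x 1 = 0" unfolding Ddec by simp
    then show False using dlb[OF x'(1) xb, of 1] m0 by simp
  qed
  define g' where "g' x v = of_real (- Im (cnj (Q x) * v) / det x) + \<i> * of_real (Im (cnj (P x) * v) / det x)" for x v
  have idg: "D x \<circ> g' x = id" if "x \<in> U" for x
  proof
    fix v
    have dn: "det x \<noteq> 0" using detnz[OF that] .
    have "D x (g' x v) = of_real (- Im (cnj (Q x) * v) / det x) * P x + of_real (Im (cnj (P x) * v) / det x) * Q x"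
      unfolding Ddec g'_def by simp
    also have "\<dots> = (of_real (- Im (cnj (Q x) * v)) * P x + of_real (Im (cnj (P x) * v)) * Q x) / of_real (det x)"
      by (simp add: add_divide_distrib)
    also have "of_real (- Im (cnj (Q x) * v)) * P x + of_real (Im (cnj (P x) * v)) * Q x = of_real (det x) * v"
      by (simp add: complex_eq_iff det_def algebra_simps)
    also have "of_real (det x) * v / of_real (det x) = v" using dn by simp
    finally show "(D x \<circ> g' x) v = id v" by simp
  qed
  have gd: "(g has_derivative g' (g y)) (at y)" if yV: "y \<in> \<eta> ` U" for y
  proof -
    obtain x where x: "x \<in> U" "y = \<eta> x" using yV by blast
    have "(g has_derivative g' x) (at (\<eta> x))"
      by (rule has_derivative_inverse_on[where f=\<eta> and f'=D and g=g and g'=g', OF openU Dd g\<eta> idg[OF x(1)] x(1)])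
    then show ?thesis using x g\<eta> by simp
  qed
  have lipg: "(1 / c)-lipschitz_on (\<eta> ` U) g"
  proof (rule lipschitz_onI)
    fix y1 y2 assume "y1 \<in> \<eta> ` U" "y2 \<in> \<eta> ` U"
    then obtain x1 x2 where x: "x1 \<in> U" "x2 \<in> U" "y1 = \<eta> x1" "y2 = \<eta> x2" by blast
    have "c * norm (x1 - x2) \<le> norm (\<eta> x1 - \<eta> x2)" using bilip[OF x(1,2)] by simp
    then have "norm (x1 - x2) \<le> norm (\<eta> x1 - \<eta> x2) / c" using c0 by (simp add: field_simps)
    then show "dist (g y1) (g y2) \<le> 1 / c * dist y1 y2" using x g\<eta> by (simp add: dist_norm)
  qed (use c0 in simp)
  have contg: "continuous_on (\<eta> ` U) g" using lipschitz_on_continuous_on[OF lipg] .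
  have PG: "continuous_on (\<eta> ` U) (\<lambda>y. P (g y))"
    using continuous_on_compose2[OF contP contg] by simp
  have QG: "continuous_on (\<eta> ` U) (\<lambda>y. Q (g y))"
    using continuous_on_compose2[OF contQ contg] by simp
  have gU: "g y \<in> U" if "y \<in> \<eta> ` U" for y using that g\<eta> by auto
  have C1g: "C1_on (\<eta> ` U) g"
    unfolding C1_on_def
  proof (intro conjI ballI)
    fix y assume "y \<in> \<eta> ` U"
    then show "g differentiable at y" using gd differentiable_def by blast
  next
    have "continuous_on (\<eta> ` U) (\<lambda>y. g' (g y) 1)"
      unfolding g'_def det_def using detnz gU
      by (intro continuous_intros PG QG) (auto simp: det_def)
    then show "continuous_on (\<eta> ` U) (\<lambda>z. frechet_derivative g (at z) 1)"
      by (rule continuous_on_eq) (metis gd frechet_derivative_at)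
  next
    have "continuous_on (\<eta> ` U) (\<lambda>y. g' (g y) \<i>)"
      unfolding g'_def det_def using detnz gU
      by (intro continuous_intros PG QG) (auto simp: det_def)
    then show "continuous_on (\<eta> ` U) (\<lambda>z. frechet_derivative g (at z) \<i>)"
      by (rule continuous_on_eq) (metis gd frechet_derivative_at)
  qed
  show ?thesis
    apply (rule exI[of _ U])
    using openU GU injU C1U openV g\<eta> C1g c0 C0 bilip by blast
qed



lemma ball_seg:
  fixes x y c :: complex
  assumes "x \<in> ball c r" "y \<in> ball c r" "t \<in> {0..1}"
  shows "y + t *\<^sub>R (x - y) \<in> ball c r"
proof -
  have "y + t *\<^sub>R (x - y) = (1 - t) *\<^sub>R y + t *\<^sub>R x" by (simp add: algebra_simps)
  moreover have "(1 - t) *\<^sub>R y + t *\<^sub>R x \<in> ball c r"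
    using assms by (intro convexD[OF convex_ball]) auto
  ultimately show ?thesis by simp
qed

lemma global:
  fixes \<eta> :: "complex \<Rightarrow> complex" and \<Gamma> :: "complex set"
  assumes C1: "C1_on UNIV \<eta>" and comp: "compact \<Gamma>" and ne: "\<Gamma> \<noteq> {}" and inj: "inj_on \<eta> \<Gamma>"
    and nd: "\<And>z. z \<in> \<Gamma> \<Longrightarrow> frechet_derivative \<eta> (at z) 1 \<noteq> 0"
    and cr: "\<And>z. z \<in> \<Gamma> \<Longrightarrow> frechet_derivative \<eta> (at z) \<i> = \<i> * frechet_derivative \<eta> (at z) 1"
  shows "\<exists>U. open U \<and> \<Gamma> \<subseteq> U \<and> inj_on \<eta> U \<and> C1_on U \<eta> \<and>
           open (\<eta> ` U) \<and> \<eta> ` \<Gamma> \<subseteq> \<eta> ` U \<and>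
           (\<exists>g. (\<forall>z\<in>U. g (\<eta> z) = z) \<and> C1_on (\<eta> ` U) g) \<and>
           (\<exists>c C. 0 < c \<and> 0 < C \<and> (\<forall>z\<in>U. \<forall>w\<in>U.
               c * norm (z - w) \<le> norm (\<eta> z - \<eta> w) \<and> norm (\<eta> z - \<eta> w) \<le> C * norm (z - w)))"
proof -
  define D where "D x = frechet_derivative \<eta> (at x)" for x
  define P where "P x = D x 1" for x
  define Q where "Q x = D x \<i>" for x
  have diff: "\<eta> differentiable (at z)" for z using C1 unfolding C1_on_def by blast
  have Dd: "(\<eta> has_derivative D x) (at x)" for x
    unfolding D_def using diff frechet_derivative_works by blast
  have Ddec: "D x h = of_real (Re h) * P x + of_real (Im h) * Q x" for x h
    unfolding P_def Q_def using has_derivative_linear[OF Dd] by (rule lin_decomp)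
  have contP: "continuous_on UNIV P" using C1 unfolding C1_on_def P_def D_def by blast
  have contQ: "continuous_on UNIV Q" using C1 unfolding C1_on_def Q_def D_def by blast
  have conteta: "continuous_on UNIV \<eta>"
  proof (rule continuous_at_imp_continuous_on, intro ballI)
    fix z :: complex show "isCont \<eta> z"
      using diff[of z] differentiable_imp_continuous_within by blast
  qed
  have crQ: "Q z = \<i> * P z" if "z \<in> \<Gamma>" for z
    using cr[OF that] by (simp add: P_def Q_def D_def)
  have DG: "D z h = h * P z" if "z \<in> \<Gamma>" for z h
  proof -
    have "D z h = of_real (Re h) * P z + of_real (Im h) * (\<i> * P z)"
      using Ddec[of z h] crQ[OF that] by simp
    also have "\<dots> = (of_real (Re h) + \<i> * of_real (Im h)) * P z" by (simp add: algebra_simps)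
    also have "\<dots> = h * P z" by (simp add: complex_eq[symmetric])
    finally show ?thesis .
  qed
  obtain m where m0: "m > 0" and mP: "\<And>z. z \<in> \<Gamma> \<Longrightarrow> m \<le> norm (P z)"
  proof -
    have "continuous_on \<Gamma> (\<lambda>z. norm (P z))"
      using contP by (intro continuous_intros) (auto intro: continuous_on_subset)
    from continuous_attains_inf[OF comp ne this] obtain x0 where
      "x0 \<in> \<Gamma>" "\<And>y. y \<in> \<Gamma> \<Longrightarrow> norm (P x0) \<le> norm (P y)" by blast
    moreover have "P x0 \<noteq> 0" using nd[OF \<open>x0 \<in> \<Gamma>\<close>] by (simp add: P_def D_def)
    ultimately show ?thesis using that[of "norm (P x0)"] by auto
  qed
  obtain R0 where R0: "\<And>z. z \<in> \<Gamma> \<Longrightarrow> norm z \<le> R0"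
    using compact_imp_bounded[OF comp] bounded_iff by blast
  have R0pos: "0 \<le> R0" using ne R0 norm_ge_zero by (meson ex_in_conv order_trans)
  define K where "K = cball (0::complex) (R0 + 1)"
  have compK: "compact K" unfolding K_def by simp
  have K0: "0 \<in> K" unfolding K_def using R0pos by simp
  obtain \<rho>P where \<rho>P: "\<rho>P > 0" "\<And>x y. x \<in> K \<Longrightarrow> y \<in> K \<Longrightarrow> dist y x < \<rho>P \<Longrightarrow> dist (P y) (P x) < m / 4"
  proof -
    have "uniformly_continuous_on K P"
      using compact_uniformly_continuous[OF continuous_on_subset[OF contP] compK] by simp
    then show ?thesis unfolding uniformly_continuous_on_def using m0 that
      by (metis divide_pos_pos zero_less_numeral)
  qed
  obtain \<rho>Q where \<rho>Q: "\<rho>Q > 0" "\<And>x y. x \<in> K \<Longrightarrow> y \<in> K \<Longrightarrow> dist y x < \<rho>Q \<Longrightarrow> dist (Q y) (Q x) < m / 4"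
  proof -
    have "uniformly_continuous_on K Q"
      using compact_uniformly_continuous[OF continuous_on_subset[OF contQ] compK] by simp
    then show ?thesis unfolding uniformly_continuous_on_def using m0 that
      by (metis divide_pos_pos zero_less_numeral)
  qed
  define \<rho> where "\<rho> = min (min \<rho>P \<rho>Q) 1"
  have \<rho>0: "\<rho> > 0" using \<rho>P \<rho>Q by (simp add: \<rho>_def)
  obtain B where B: "\<And>x. x \<in> K \<Longrightarrow> norm (P x) + norm (Q x) \<le> B"
  proof -
    have "continuous_on K (\<lambda>x. norm (P x) + norm (Q x))"
      using contP contQ by (intro continuous_intros) (auto intro: continuous_on_subset)
    from continuous_attains_sup[OF compK _ this] K0 show ?thesis using that by blast
  qed
  have B0: "0 \<le> B" using B[OF K0] by (meson norm_ge_zero add_nonneg_nonneg order_trans)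
  obtain S where S: "\<And>x. x \<in> K \<Longrightarrow> norm (\<eta> x) \<le> S"
  proof -
    have "continuous_on K (\<lambda>x. norm (\<eta> x))"
      using conteta by (intro continuous_intros) (auto intro: continuous_on_subset)
    from continuous_attains_sup[OF compK _ this] K0 show ?thesis using that by blast
  qed
  have S0: "0 \<le> S" using S[OF K0] by (meson norm_ge_zero order_trans)
  have ballK: "ball z0 \<rho> \<subseteq> K" if "z0 \<in> \<Gamma>" for z0
  proof
    fix x assume "x \<in> ball z0 \<rho>"
    then have "norm (x - z0) < 1" using \<rho>_def by (simp add: dist_norm norm_minus_commute)
    moreover have "norm z0 \<le> R0" using R0 that by blast
    ultimately have "norm x \<le> R0 + 1" using norm_triangle_ineq2[of x z0] by linarith
    then show "x \<in> K" by (simp add: K_def)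
  qed
  have Dbound: "norm (D x h) \<le> B * norm h" if "x \<in> K" for x h
  proof -
    have "norm (D x h) \<le> \<bar>Re h\<bar> * norm (P x) + \<bar>Im h\<bar> * norm (Q x)"
      unfolding Ddec by (metis norm_triangle_le norm_mult norm_of_real order_refl)
    also have "\<dots> \<le> norm h * norm (P x) + norm h * norm (Q x)"
      by (intro add_mono mult_right_mono) (auto simp: abs_Re_le_cmod abs_Im_le_cmod)
    also have "\<dots> \<le> norm h * B" using B[OF that] by (metis distrib_left mult_left_mono norm_ge_zero)
    finally show ?thesis by (simp add: mult.commute)
  qed
  have ub: "norm (\<eta> x - \<eta> y) \<le> B * norm (x - y)" if "z0 \<in> \<Gamma>" "x \<in> ball z0 \<rho>" "y \<in> ball z0 \<rho>" for z0 x y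
  proof (rule differentiable_bound[OF convex_ball _ _ that(2,3)])
    show "(\<eta> has_derivative D x) (at x within ball z0 \<rho>)" for x
      using Dd has_derivative_at_withinI by blast
    show "onorm (D x) \<le> B" if "x \<in> ball z0 \<rho>" for x
      using Dbound ballK[OF \<open>z0 \<in> \<Gamma>\<close>] that by (intro onorm_le) auto
  qed
  have Ddiff: "norm (D x h - D z0 h) \<le> m / 2 * norm h" if "z0 \<in> \<Gamma>" "x \<in> ball z0 \<rho>" for z0 x h
  proof -
    have xK: "x \<in> K" and z0K: "z0 \<in> K" using ballK[OF that(1)] that(2) \<rho>0 by auto
    have dx: "dist x z0 < \<rho>" using that(2) by (simp add: dist_commute)
    have dP: "norm (P x - P z0) \<le> m / 4"
      using \<rho>P(2)[OF z0K xK] dx by (simp add: \<rho>_def dist_norm)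
    have dQ: "norm (Q x - Q z0) \<le> m / 4"
      using \<rho>Q(2)[OF z0K xK] dx by (simp add: \<rho>_def dist_norm)
    have "D x h - D z0 h = of_real (Re h) * (P x - P z0) + of_real (Im h) * (Q x - Q z0)"
      unfolding Ddec by (simp add: algebra_simps)
    then have "norm (D x h - D z0 h) \<le> \<bar>Re h\<bar> * norm (P x - P z0) + \<bar>Im h\<bar> * norm (Q x - Q z0)"
      by (metis norm_triangle_le norm_mult norm_of_real order_refl)
    also have "\<dots> \<le> norm h * (m/4) + norm h * (m/4)"
      using dP dQ by (intro add_mono mult_mono) (auto simp: abs_Re_le_cmod abs_Im_le_cmod)
    finally show ?thesis by simp
  qed
  have dlb: "m / 2 * norm h \<le> norm (D x h)" if "z0 \<in> \<Gamma>" "x \<in> ball z0 \<rho>" for z0 x h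
  proof -
    have "norm (D z0 h) = norm h * norm (P z0)" using DG[OF that(1)] by (simp add: norm_mult)
    then have "m * norm h \<le> norm (D z0 h)" using mP[OF that(1)] by (metis mult.commute mult_right_mono norm_ge_zero)
    moreover have "norm (D z0 h) \<le> norm (D x h) + norm (D x h - D z0 h)"
      by (metis add.commute diff_add_cancel norm_minus_commute norm_triangle_ineq)
    ultimately show ?thesis using Ddiff[OF that, of h] by linarith
  qed
  have lb: "m / 2 * norm (x - y) \<le> norm (\<eta> x - \<eta> y)" if "z0 \<in> \<Gamma>" "x \<in> ball z0 \<rho>" "y \<in> ball z0 \<rho>" for z0 x y
  proof -
    have "norm (\<eta> x - \<eta> y - D z0 (x - y)) \<le> norm (x - y) * (m / 2)"
    proof (rule differentiable_bound_linearization[where S="ball z0 \<rho>" and f=\<eta> and f'=D and a=y and b=x and B="m / 2"])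
      show "y + t *\<^sub>R (x - y) \<in> ball z0 \<rho>" if "t \<in> {0..1}" for t
        using ball_seg \<open>x \<in> ball z0 \<rho>\<close> \<open>y \<in> ball z0 \<rho>\<close> that by blast
      show "(\<eta> has_derivative D x) (at x within ball z0 \<rho>)" for x
        using Dd has_derivative_at_withinI by blast
      show "onorm (D x - D z0) \<le> m / 2" if "x \<in> ball z0 \<rho>" for x
        using Ddiff[OF \<open>z0 \<in> \<Gamma>\<close> that] by (intro onorm_le) auto
      show "z0 \<in> ball z0 \<rho>" using \<rho>0 by simp
    qed
    moreover have "norm (D z0 (x - y)) \<ge> m * norm (x - y)"
      using DG[OF that(1)] mP[OF that(1)] by (metis norm_mult mult.commute mult_right_mono norm_ge_zero)
    moreover have "norm (D z0 (x - y)) \<le> norm (\<eta> x - \<eta> y) + norm (\<eta> x - \<eta> y - D z0 (x - y))"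
      by (metis add.commute diff_add_cancel norm_minus_commute norm_triangle_ineq)
    ultimately show ?thesis by (simp add: algebra_simps)
  qed
  show ?thesis
  proof (rule global2[where D=D and P=P and Q=Q and m=m and \<rho>=\<rho> and B=B and S=S,
        OF C1 comp ne inj Dd Ddec _ contP contQ conteta m0 \<rho>0 _ B0 S0 R0pos R0 _ ub lb dlb])
    show "D x = frechet_derivative \<eta> (at x)" for x by (simp add: D_def)
    show "\<rho> \<le> 1" by (simp add: \<rho>_def)
    show "norm (\<eta> x) \<le> S" if "norm x \<le> R0 + 1" for x using S that by (simp add: K_def)
  qed
qed


theorem lemma2:
  fixes \<alpha> :: real and \<psi> \<eta> :: "complex \<Rightarrow> complex" and \<Gamma> :: "complex set"
  assumes "0 < \<alpha>" and "\<alpha> < 1"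
    and "C1a_jordan_param \<alpha> \<psi> \<Gamma>"
    and "C1a_on_curve \<alpha> \<psi> \<eta>"
    and "\<eta> ` \<Gamma> = sphere 0 1"
    and "inj_on \<eta> \<Gamma>"
    and "\<forall>t. (\<lambda>s. the_inv_into \<Gamma> \<eta> (cis s)) differentiable (at t)"
    and "pseudoanalytic_ext \<alpha> \<Gamma> \<eta> \<eta>"
  shows "\<exists>U. open U \<and> \<Gamma> \<subseteq> U \<and> inj_on \<eta> U \<and> C1_on U \<eta> \<and>
           open (\<eta> ` U) \<and> sphere 0 1 \<subseteq> \<eta> ` U \<and>
           (\<exists>g. (\<forall>z\<in>U. g (\<eta> z) = z) \<and> C1_on (\<eta> ` U) g) \<and>
           (\<exists>c C. 0 < c \<and> 0 < C \<and> (\<forall>z\<in>U. \<forall>w\<in>U.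
               c * norm (z - w) \<le> norm (\<eta> z - \<eta> w) \<and> norm (\<eta> z - \<eta> w) \<le> C * norm (z - w)))"
proof -
  note a0 = assms(1) and psi = assms(3) and img = assms(5) and inj = assms(6) and inv = assms(7)
    and pa = assms(8)
  obtain \<psi>' where bij: "bij_betw \<psi> (sphere 0 1) \<Gamma>"
    and \<psi>d: "\<And>t. ((\<lambda>s. \<psi> (cis s)) has_vector_derivative \<psi>' t) (at t)"
    using psi unfolding C1a_jordan_param_def C1a_circle_with_def by blast
  have C1: "C1_on UNIV \<eta>" using pa unfolding pseudoanalytic_ext_def by blast
  obtain Cd where Cd: "\<And>z. norm (dbar \<eta> z) \<le> Cd * infdist z \<Gamma> powr \<alpha>"
    using pa unfolding pseudoanalytic_ext_def by blast
  have diff: "\<eta> differentiable (at z)" for z using C1 unfolding C1_on_def by blast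
  have cr: "frechet_derivative \<eta> (at z) \<i> = \<i> * frechet_derivative \<eta> (at z) 1" if "z \<in> \<Gamma>" for z
  proof -
    have "norm (dbar \<eta> z) \<le> 0" using Cd[of z] that by simp
    then have "frechet_derivative \<eta> (at z) 1 + \<i> * frechet_derivative \<eta> (at z) \<i> = 0"
      unfolding dbar_def by simp
    then have "\<i> * (frechet_derivative \<eta> (at z) 1 + \<i> * frechet_derivative \<eta> (at z) \<i>) = 0" by simp
    then show ?thesis by (simp add: algebra_simps)
  qed
  have nd: "frechet_derivative \<eta> (at z) 1 \<noteq> 0" if "z \<in> \<Gamma>" for z
    using nondeg[OF psi img inj inv diff cr that] .
  have Geq: "\<Gamma> = (\<lambda>s. \<psi> (cis s)) ` {-pi..pi}"
  proof
    show "(\<lambda>s. \<psi> (cis s)) ` {-pi..pi} \<subseteq> \<Gamma>" using bij unfolding bij_betw_def by auto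
    show "\<Gamma> \<subseteq> (\<lambda>s. \<psi> (cis s)) ` {-pi..pi}"
    proof
      fix z assume "z \<in> \<Gamma>"
      then obtain u where u: "u \<in> sphere 0 1" "z = \<psi> u" using bij unfolding bij_betw_def by blast
      have "cis (Arg u) = u" using u(1) by (simp add: cis_Arg1)
      moreover have "Arg u \<in> {-pi..pi}" using mpi_less_Arg[of u] Arg_le_pi[of u] by simp
      ultimately show "z \<in> (\<lambda>s. \<psi> (cis s)) ` {-pi..pi}" using u(2) by (metis image_eqI)
    qed
  qed
  have contg: "continuous_on {-pi..pi} (\<lambda>s. \<psi> (cis s))"
  proof (rule continuous_at_imp_continuous_on, intro ballI)
    fix s :: real show "isCont (\<lambda>s. \<psi> (cis s)) s"
      using \<psi>d[of s] has_vector_derivative_continuous by blast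
  qed
  have comp: "compact \<Gamma>" unfolding Geq by (rule compact_continuous_image[OF contg compact_Icc])
  have ne: "\<Gamma> \<noteq> {}" unfolding Geq using pi_ge_zero by auto
  from global[OF C1 comp ne inj nd cr] obtain U where U:
    "open U \<and> \<Gamma> \<subseteq> U \<and> inj_on \<eta> U \<and> C1_on U \<eta> \<and>
           open (\<eta> ` U) \<and> \<eta> ` \<Gamma> \<subseteq> \<eta> ` U \<and>
           (\<exists>g. (\<forall>z\<in>U. g (\<eta> z) = z) \<and> C1_on (\<eta> ` U) g) \<and>
           (\<exists>c C. 0 < c \<and> 0 < C \<and> (\<forall>z\<in>U. \<forall>w\<in>U.
               c * norm (z - w) \<le> norm (\<eta> z - \<eta> w) \<and> norm (\<eta> z - \<eta> w) \<le> C * norm (z - w)))"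
    by blast
  then show ?thesis using img by (intro exI[of _ U]) auto
qed

end
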